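(* If $A\subseteq\mathbb{R}$ is homogeneous, then $A$ is not order-isomorphic to its complement $\mathbb{R}\setminus A$. Equivalently, if $A\subseteq \mathbb{R}$ is order-isomorphic to $\mathbb{R}\setminus A$, then there is an open interval $I$ such that $A\not\cong A\cap I$.
   Context: A suborder $A\subseteq\mathbb{R}$ is homogeneous if $A\cong A\cap I$ (order-isomorphism) for every open interval $I=(a,b)$ with $-\infty\le a<b\le\infty$. *)

theory Defs
  imports Complex_Main "HOL-Library.Extended_Real"
begin

definition order_iso :: "real set \<Rightarrow> real set \<Rightarrow> bool" where
  "order_iso A B \<longleftrightarrow>
     (\<exists>f. bij_betw f A B \<and> (\<forall>x\<in>A. \<forall>y\<in>A. x < y \<longleftrightarrow> f x < f y))"

definition open_ival :: "ereal \<Rightarrow> ereal \<Rightarrow> real set" where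
  "open_ival a b = {x. a < ereal x \<and> ereal x < b}"

definition homogeneous :: "real set \<Rightarrow> bool" where
  "homogeneous A \<longleftrightarrow> (\<forall>a b. a < b \<longrightarrow> order_iso A (A \<inter> open_ival a b))"

end

theory Submission
  imports Defs
begin

definition iso :: "(real \<Rightarrow> real) \<Rightarrow> real set \<Rightarrow> real set \<Rightarrow> bool" where
  "iso f X Y \<longleftrightarrow> bij_betw f X Y \<and> (\<forall>x\<in>X. \<forall>y\<in>X. x < y \<longleftrightarrow> f x < f y)"

lemma order_iso_iff: "order_iso X Y \<longleftrightarrow> (\<exists>f. iso f X Y)"
  by (simp add: order_iso_def iso_def)

lemma iso_sym: assumes "iso f X Y" shows "iso (inv_into X f) Y X"
proof -
  have b: "bij_betw f X Y" and o: "\<forall>x\<in>X. \<forall>y\<in>X. x < y \<longleftrightarrow> f x < f y"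
    using assms by (auto simp: iso_def)
  have "bij_betw (inv_into X f) Y X" using b by (rule bij_betw_inv_into)
  moreover have "\<forall>x\<in>Y. \<forall>y\<in>Y. x < y \<longleftrightarrow> inv_into X f x < inv_into X f y"
  proof (intro ballI)
    fix x y assume xy: "x \<in> Y" "y \<in> Y"
    have i: "inv_into X f x \<in> X" "inv_into X f y \<in> X" and e: "f (inv_into X f x) = x" "f (inv_into X f y) = y"
      using xy b by (auto simp: bij_betw_def inv_into_into f_inv_into_f)
    have "inv_into X f x < inv_into X f y \<longleftrightarrow> f (inv_into X f x) < f (inv_into X f y)"
      using o i by blast
    then show "x < y \<longleftrightarrow> inv_into X f x < inv_into X f y" using e by simp
  qed
  ultimately show ?thesis by (simp add: iso_def)
qed

lemma iso_trans: assumes "iso f X Y" "iso g Y Z" shows "iso (g \<circ> f) X Z"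
proof -
  have "bij_betw (g \<circ> f) X Z" using assms by (auto simp: iso_def intro: bij_betw_trans)
  moreover have "\<forall>x\<in>X. f x \<in> Y" using assms by (auto simp: iso_def bij_betw_def)
  ultimately show ?thesis using assms unfolding iso_def by auto
qed

lemma order_iso_sym: "order_iso X Y \<Longrightarrow> order_iso Y X"
  using iso_sym order_iso_iff by blast

lemma order_iso_trans: "order_iso X Y \<Longrightarrow> order_iso Y Z \<Longrightarrow> order_iso X Z"
  by (meson iso_trans order_iso_iff)

lemma iso_restrict: assumes "iso f X Y" "S \<subseteq> X" shows "iso f S (f ` S)"
  using assms unfolding iso_def bij_betw_def by (auto intro: inj_on_subset)

lemma iso_apply: "iso f X Y \<Longrightarrow> x \<in> X \<Longrightarrow> f x \<in> Y"
  unfolding iso_def bij_betw_def by auto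

lemma iso_surj: "iso f X Y \<Longrightarrow> y \<in> Y \<Longrightarrow> \<exists>x\<in>X. f x = y"
  unfolding iso_def bij_betw_def by auto

lemma iso_less: "iso f X Y \<Longrightarrow> x \<in> X \<Longrightarrow> z \<in> X \<Longrightarrow> x < z \<longleftrightarrow> f x < f z"
  unfolding iso_def by auto

lemma img_gen: assumes f: "iso f X Y" and P: "\<And>x. x \<in> X \<Longrightarrow> P x \<longleftrightarrow> Q (f x)"
  shows "f ` {x\<in>X. P x} = {y\<in>Y. Q y}"
proof
  show "f ` {x\<in>X. P x} \<subseteq> {y\<in>Y. Q y}"
  proof
    fix y assume "y \<in> f ` {x\<in>X. P x}"
    then obtain x where x: "x \<in> X" "P x" "y = f x" by blast
    then show "y \<in> {y\<in>Y. Q y}" using iso_apply[OF f x(1)] P by simp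
  qed
  show "{y\<in>Y. Q y} \<subseteq> f ` {x\<in>X. P x}"
  proof
    fix y assume y: "y \<in> {y\<in>Y. Q y}"
    then obtain x where x: "x \<in> X" "f x = y" using iso_surj[OF f] by blast
    then have "P x" using y P by simp
    then show "y \<in> f ` {x\<in>X. P x}" using x by blast
  qed
qed

lemma img_below: assumes "iso f X Y" "u \<in> X" shows "f ` {x\<in>X. x<u} = {y\<in>Y. y < f u}"
  by (rule img_gen[OF assms(1)]) (simp add: iso_less[OF assms(1) _ assms(2)])

lemma img_above: assumes "iso f X Y" "u \<in> X" shows "f ` {x\<in>X. u<x} = {y\<in>Y. f u < y}"
  by (rule img_gen[OF assms(1)]) (simp add: iso_less[OF assms(1) assms(2)])

lemma img_between: assumes "iso f X Y" "u \<in> X" "v \<in> X"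
  shows "f ` {x\<in>X. u<x \<and> x<v} = {y\<in>Y. f u < y \<and> y < f v}"
  by (rule img_gen[OF assms(1)]) (simp add: iso_less[OF assms(1) assms(2)] iso_less[OF assms(1) _ assms(3)])

lemma oi_img: assumes "iso f X Y" "S \<subseteq> X" "f ` S = T" shows "order_iso S T"
  using iso_restrict[OF assms(1,2)] assms(3) order_iso_iff by blast

lemma hom_below: "homogeneous A \<Longrightarrow> order_iso A {x\<in>A. x < t}"
proof -
  assume "homogeneous A"
  then have "order_iso A (A \<inter> open_ival (-\<infinity>) (ereal t))" unfolding homogeneous_def by simp
  moreover have "A \<inter> open_ival (-\<infinity>) (ereal t) = {x\<in>A. x < t}" by (auto simp: open_ival_def)
  ultimately show ?thesis by simp
qed

lemma hom_above: "homogeneous A \<Longrightarrow> order_iso A {x\<in>A. t < x}"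
proof -
  assume "homogeneous A"
  then have "order_iso A (A \<inter> open_ival (ereal t) \<infinity>)" unfolding homogeneous_def by simp
  moreover have "A \<inter> open_ival (ereal t) \<infinity> = {x\<in>A. t < x}" by (auto simp: open_ival_def)
  ultimately show ?thesis by simp
qed

lemma hom_between: "homogeneous A \<Longrightarrow> s < t \<Longrightarrow> order_iso A {x\<in>A. s < x \<and> x < t}"
proof -
  assume "homogeneous A" "s < t"
  then have "order_iso A (A \<inter> open_ival (ereal s) (ereal t))" unfolding homogeneous_def by simp
  moreover have "A \<inter> open_ival (ereal s) (ereal t) = {x\<in>A. s < x \<and> x < t}" by (auto simp: open_ival_def)
  ultimately show ?thesis by simp
qed

lemma oi_ne: "order_iso X Y \<Longrightarrow> X \<noteq> {} \<Longrightarrow> Y \<noteq> {}"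
  unfolding order_iso_def bij_betw_def by auto

lemma glue:
  assumes p: "p\<in>X" and q: "q\<in>Y" and g: "iso g {x\<in>X. x<p} {y\<in>Y. y<q}"
    and h: "iso h {x\<in>X. p<x} {y\<in>Y. q<y}"
  shows "iso (\<lambda>x. if x<p then g x else if x=p then q else h x) X Y"
proof -
  define T where "T = (\<lambda>x. if x<p then g x else if x=p then q else h x)"
  have g1: "\<And>x. x\<in>X \<Longrightarrow> x<p \<Longrightarrow> g x \<in> Y \<and> g x < q" using iso_apply[OF g] by auto
  have h1: "\<And>x. x\<in>X \<Longrightarrow> p<x \<Longrightarrow> h x \<in> Y \<and> q < h x" using iso_apply[OF h] by auto
  have gm: "\<And>x z. x\<in>X \<Longrightarrow> z\<in>X \<Longrightarrow> x<p \<Longrightarrow> z<p \<Longrightarrow> x<z \<Longrightarrow> g x < g z"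
  proof -
    fix x z assume a: "x\<in>X" "z\<in>X" "x<p" "z<p" "x<z"
    have "x<z \<longleftrightarrow> g x < g z" by (rule iso_less[OF g]) (use a in auto)
    then show "g x < g z" using a by simp
  qed
  have hm: "\<And>x z. x\<in>X \<Longrightarrow> z\<in>X \<Longrightarrow> p<x \<Longrightarrow> p<z \<Longrightarrow> x<z \<Longrightarrow> h x < h z"
  proof -
    fix x z assume a: "x\<in>X" "z\<in>X" "p<x" "p<z" "x<z"
    have "x<z \<longleftrightarrow> h x < h z" by (rule iso_less[OF h]) (use a in auto)
    then show "h x < h z" using a by simp
  qed
  have gs: "\<And>y. y\<in>Y \<Longrightarrow> y<q \<Longrightarrow> \<exists>x\<in>X. x<p \<and> g x = y" using iso_surj[OF g] by auto
  have hs: "\<And>y. y\<in>Y \<Longrightarrow> q<y \<Longrightarrow> \<exists>x\<in>X. p<x \<and> h x = y" using iso_surj[OF h] by auto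
  have sm: "\<And>x z. x\<in>X \<Longrightarrow> z\<in>X \<Longrightarrow> x<z \<Longrightarrow> T x < T z"
  proof -
    fix x z assume xz: "x\<in>X" "z\<in>X" "x<z"
    show "T x < T z"
    proof (cases "x < p")
      case True
      consider "z < p" | "z = p" | "p < z" by linarith
      then show ?thesis
      proof cases
        case 1 then show ?thesis using True xz gm by (simp add: T_def)
      next
        case 2 then show ?thesis using True xz g1 by (simp add: T_def)
      next
        case 3
        have "g x < q" "q < h z" using True 3 xz g1 h1 by auto
        then show ?thesis using True 3 by (simp add: T_def)
      qed
    next
      case False
      then have pz: "p < z" using xz by linarith
      show ?thesis
      proof (cases "x = p")
        case True then show ?thesis using pz xz h1 by (simp add: T_def)
      next
        case False
        then have "p < x" using \<open>\<not> x < p\<close> by linarith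
        then show ?thesis using pz xz hm by (simp add: T_def)
      qed
    qed
  qed
  have inj: "inj_on T X"
  proof (rule inj_onI)
    fix x z assume "x\<in>X" "z\<in>X" "T x = T z"
    then show "x = z" using sm by (metis less_irrefl linorder_neqE_linordered_idom)
  qed
  have img: "T ` X = Y"
  proof
    show "T ` X \<subseteq> Y"
    proof
      fix y assume "y \<in> T ` X"
      then obtain x where x: "x \<in> X" "y = T x" by blast
      consider "x < p" | "x = p" | "p < x" by linarith
      then show "y \<in> Y"
        by cases (use x g1 h1 q in \<open>auto simp: T_def\<close>)
    qed
    show "Y \<subseteq> T ` X"
    proof
      fix y assume y: "y\<in>Y"
      consider "y<q" | "y=q" | "q<y" by linarith
      then show "y \<in> T ` X"
      proof cases
        case 1 then obtain x where "x\<in>X" "x<p" "g x = y" using gs y by blast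
        then show ?thesis unfolding T_def by (auto intro!: image_eqI[of _ _ x])
      next
        case 2 then show ?thesis using p unfolding T_def by (auto intro!: image_eqI[of _ _ p])
      next
        case 3 then obtain x where "x\<in>X" "p<x" "h x = y" using hs y by blast
        then show ?thesis unfolding T_def by (auto intro!: image_eqI[of _ _ x])
      qed
    qed
  qed
  have "\<forall>x\<in>X. \<forall>z\<in>X. x < z \<longleftrightarrow> T x < T z"
    using sm by (metis less_asym linorder_neqE_linordered_idom)
  then show ?thesis using inj img unfolding iso_def bij_betw_def T_def by auto
qed

lemma nocross:
  fixes Y :: "real set"
  assumes iso: "iso T (UNIV - Y) Y" and dense: "\<And>p q. p<q \<Longrightarrow> \<exists>y\<in>Y. p<y \<and> y<q"
    and x1: "x1 \<notin> Y" and x2: "x2 \<notin> Y" and x12: "x1 < x2" and t1: "T x1 < x1" and t2: "T x2 > x2"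
  shows False
proof -
  have mapsto: "\<And>x. x \<notin> Y \<Longrightarrow> T x \<in> Y" using iso_apply[OF iso] by auto
  have surj: "\<And>y. y\<in>Y \<Longrightarrow> \<exists>x. x\<notin>Y \<and> T x = y" using iso_surj[OF iso] by auto
  have mono: "\<And>x z. x\<notin>Y \<Longrightarrow> z\<notin>Y \<Longrightarrow> x<z \<longleftrightarrow> T x < T z" using iso_less[OF iso] by auto
  define S where "S = {x. x\<notin>Y \<and> x1 \<le> x \<and> x \<le> x2 \<and> T x < x}"
  have x1S: "x1 \<in> S" using x1 x12 t1 by (auto simp: S_def)
  have bdd: "bdd_above S" unfolding S_def bdd_above_def by auto
  have ne: "S \<noteq> {}" using x1S by auto
  define s where "s = Sup S"
  have up: "\<And>x. x\<in>S \<Longrightarrow> x \<le> s" unfolding s_def using bdd by (simp add: cSup_upper)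
  have lt: "\<And>w. w < s \<Longrightarrow> \<exists>z\<in>S. w < z" unfolding s_def using less_cSup_iff[OF ne bdd] by blast
  have s1: "x1 \<le> s" using up x1S by auto
  have s2: "s \<le> x2" unfolding s_def using ne by (rule cSup_least) (auto simp: S_def)
  show False
  proof (cases "s \<in> Y")
    case True
    obtain w where w: "w\<notin>Y" "T w = s" using surj True by blast
    have "w \<noteq> s" using True w by auto
    then consider "w<s" | "w>s" by linarith
    then show False
    proof cases
      case 1
      then obtain z where z: "z\<in>S" "w<z" using lt by blast
      then have "z \<le> s" "z\<notin>Y" "T z < z" using up by (auto simp: S_def)
      moreover have "z \<noteq> s" using True \<open>z\<notin>Y\<close> by auto
      moreover have "T w < T z" using mono[OF w(1) \<open>z\<notin>Y\<close>] z(2) by simp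
      ultimately show False using w by auto
    next
      case 2
      show False
      proof (cases "w \<le> x2")
        case True
        then have "w \<in> S" using 2 s1 w by (auto simp: S_def)
        then show False using up 2 by force
      next
        case False
        then have "T x2 < T w" using mono[OF x2 w(1)] by simp
        then show False using t2 s2 w by auto
      qed
    qed
  next
    case False
    have "T s \<noteq> s" using mapsto False by force
    then consider "T s < s" | "T s > s" by linarith
    then show False
    proof cases
      case 1
      obtain y where y: "y\<in>Y" "T s < y" "y < s" using dense 1 by blast
      obtain x where x: "x\<notin>Y" "T x = y" using surj y by blast
      have "s < x" using mono[OF False x(1)] x(2) y(2) by simp
      have "x \<le> x2"
      proof (rule ccontr)
        assume "\<not> x \<le> x2"
        then have "T x2 < T x" using mono[OF x2 x(1)] by simp
        then show False using t2 x y s2 by auto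
      qed
      then have "x \<in> S" using x y \<open>s<x\<close> s1 by (auto simp: S_def)
      then show False using up \<open>s<x\<close> by force
    next
      case 2
      obtain y where y: "y\<in>Y" "s < y" "y < T s" using dense 2 by blast
      obtain x where x: "x\<notin>Y" "T x = y" using surj y by blast
      have "x < s" using mono[OF x(1) False] x(2) y(3) by simp
      then obtain z where z: "z\<in>S" "x<z" using lt by blast
      have "z \<le> s" using up z by auto
      have "z \<noteq> s" using z 2 by (auto simp: S_def)
      have zY: "z \<notin> Y" using z by (simp add: S_def)
      have "T x < T z" using mono[OF x(1) zY] z(2) by simp
      then show False using z y x \<open>z \<le> s\<close> by (auto simp: S_def)
    qed
  qed
qed

theorem mainTheorem12:
  fixes A :: "real set"
  assumes "homogeneous A"
  shows "\<not> order_iso A (UNIV - A)"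
proof
  assume "order_iso A (UNIV - A)"
  then obtain f where f: "iso f A (UNIV - A)" using order_iso_iff by blast
  define B where "B = UNIV - A"
  have fB: "iso f A B" using f B_def by simp
  have Ane: "A \<noteq> {}"
  proof
    assume "A = {}"
    then show False using f unfolding iso_def bij_betw_def by auto
  qed
  have dense: "\<And>p q. p<q \<Longrightarrow> \<exists>y\<in>A. p<y \<and> y<q"
  proof -
    fix p q :: real assume pq: "p<q"
    have "{x\<in>A. p < x \<and> x < q} \<noteq> {}" using oi_ne[OF hom_between[OF assms pq] Ane] .
    then show "\<exists>y\<in>A. p<y \<and> y<q" by auto
  qed
  have unb1: "\<And>t. \<exists>a\<in>A. a < t"
  proof -
    fix t
    have "{x\<in>A. x < t} \<noteq> {}" using oi_ne[OF hom_below[OF assms] Ane] .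
    then show "\<exists>a\<in>A. a < t" by auto
  qed
  have unb2: "\<And>t. \<exists>a\<in>A. t < a"
  proof -
    fix t
    have "{x\<in>A. t < x} \<noteq> {}" using oi_ne[OF hom_above[OF assms] Ane] .
    then show "\<exists>a\<in>A. t < a" by auto
  qed
  obtain u1 where u1: "u1 \<in> A" using Ane by blast
  obtain u2 where u2: "u2 \<in> A" "u1 < u2" using unb2 by blast
  define y1 where "y1 = f u1"
  define y2 where "y2 = f u2"
  have y1B: "y1 \<in> B" using iso_apply[OF fB u1] y1_def by simp
  have y2B: "y2 \<in> B" using iso_apply[OF fB u2(1)] y2_def by simp
  have y12: "y1 < y2" using iso_less[OF fB u1 u2(1)] u2 y1_def y2_def by simp
  obtain a1 where a1: "a1 \<in> A" "a1 < y1" using unb1 by blast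
  obtain a2 where a2: "a2 \<in> A" "y2 < a2" using unb2 by blast
  have P1: "order_iso {x\<in>B. x<y1} {x\<in>A. x<a1}"
  proof -
    have "order_iso {x\<in>A. x<u1} {x\<in>B. x<y1}"
      using oi_img[OF fB _ img_below[OF fB u1]] y1_def by auto
    then show ?thesis using hom_below[OF assms, of u1] hom_below[OF assms, of a1]
      by (meson order_iso_sym order_iso_trans)
  qed
  have P2: "order_iso {x\<in>B. y1<x \<and> x<y2} {x\<in>A. a1<x \<and> x<a2}"
  proof -
    have "order_iso {x\<in>A. u1<x \<and> x<u2} {x\<in>B. y1<x \<and> x<y2}"
      using oi_img[OF fB _ img_between[OF fB u1 u2(1)]] y1_def y2_def by auto
    moreover have "a1 < a2" using a1 a2 y12 by linarith
    ultimately show ?thesis using hom_between[OF assms u2(2)] hom_between[OF assms, of a1 a2]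
      by (meson order_iso_sym order_iso_trans)
  qed
  have P3: "order_iso {x\<in>B. y2<x} {x\<in>A. a2<x}"
  proof -
    have "order_iso {x\<in>A. u2<x} {x\<in>B. y2<x}"
      using oi_img[OF fB _ img_above[OF fB u2(1)]] y2_def by auto
    then show ?thesis using hom_above[OF assms, of u2] hom_above[OF assms, of a2]
      by (meson order_iso_sym order_iso_trans)
  qed
  obtain g1 where g1: "iso g1 {x\<in>B. x<y1} {x\<in>A. x<a1}" using P1 order_iso_iff by blast
  obtain g2 where g2: "iso g2 {x\<in>B. y1<x \<and> x<y2} {x\<in>A. a1<x \<and> x<a2}" using P2 order_iso_iff by blast
  obtain g3 where g3: "iso g3 {x\<in>B. y2<x} {x\<in>A. a2<x}" using P3 order_iso_iff by blast
  define Phi where "Phi = (\<lambda>x. if x<y2 then g2 x else if x=y2 then a2 else g3 x)"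
  have e1: "{x\<in>{x\<in>B. y1<x}. x<y2} = {x\<in>B. y1<x \<and> x<y2}" by auto
  have e2: "{x\<in>{x\<in>A. a1<x}. x<a2} = {x\<in>A. a1<x \<and> x<a2}" by auto
  have e3: "{x\<in>{x\<in>B. y1<x}. y2<x} = {x\<in>B. y2<x}" using y12 by auto
  have e4: "{x\<in>{x\<in>A. a1<x}. a2<x} = {x\<in>A. a2<x}" using a1 a2 y12 by auto
  have Phi: "iso Phi {x\<in>B. y1<x} {x\<in>A. a1<x}"
    unfolding Phi_def
    by (rule glue) (use y2B y12 a2 a1 g2 g3 e1 e2 e3 e4 in auto)
  define T where "T = (\<lambda>x. if x<y1 then g1 x else if x=y1 then a1 else Phi x)"
  have T: "iso T B A"
    unfolding T_def
    by (rule glue) (use y1B a1 g1 Phi in auto)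
  have T1: "T y1 = a1" unfolding T_def by simp
  have T2: "T y2 = a2" unfolding T_def Phi_def using y12 by simp
  have TB: "iso T (UNIV - A) A" using T B_def by simp
  have "y1 \<notin> A" "y2 \<notin> A" using y1B y2B B_def by auto
  moreover have "T y1 < y1" "y2 < T y2" using T1 T2 a1(2) a2(2) by auto
  ultimately show False
    using nocross[OF TB dense] y12 by blast
qed

end
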